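(* Let $(R,\mathfrak{m})$ be a commutative Artinian local ring with identity, $\mathfrak{m}\neq0$ and $\mathfrak{m}^2=0$. Let $k\ge2$ and let $f_1,\dots,f_k\in R[x]$ be GE polynomials with $\deg f_i=d_i$ and $d_1\ge d_2\ge\dots\ge d_k$. Then there is a GE polynomial $h$ of degree $d_1$ such that $f_1f_2\cdots f_k=h\,x^{d_2+d_3+\dots+d_k}$. If moreover $f_1$ is irreducible and $d_1>d_2$, then $h$ is irreducible and $\operatorname{ord}(f_1f_2\cdots f_k)=d_2+\dots+d_k$.
   Context: A generalized Eisenstein (GE) polynomial is a nonconstant monic polynomial $x^d+f_{d-1}x^{d-1}+\dots+f_0\in R[x]$ with $f_i\in\mathfrak{m}$ for all $i<d$. A nonunit polynomial is irreducible if in any factorization into two polynomials one factor is a unit of $R[x]$. The order $\operatorname{ord}(f)$ of a nonzero polynomial $f=\sum a_ix^i$ is the least $i$ with $a_i\neq0$. *)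

theory Defs
  imports "HOL-Computational_Algebra.Polynomial" "HOL-Computational_Algebra.Factorial_Ring"
begin

definition is_ideal :: "'a::comm_ring_1 set \<Rightarrow> bool" where
  "is_ideal I \<longleftrightarrow> 0 \<in> I \<and> (\<forall>x\<in>I. \<forall>y\<in>I. x + y \<in> I) \<and> (\<forall>r. \<forall>x\<in>I. r * x \<in> I)"

definition maximal_ideal :: "'a::comm_ring_1 set \<Rightarrow> bool" where
  "maximal_ideal I \<longleftrightarrow> is_ideal I \<and> I \<noteq> UNIV \<and>
     (\<forall>J. is_ideal J \<and> I \<subseteq> J \<longrightarrow> J = I \<or> J = UNIV)"

definition artinian_ring :: "'a::comm_ring_1 itself \<Rightarrow> bool" where
  "artinian_ring _ \<longleftrightarrow>
     (\<forall>I :: nat \<Rightarrow> 'a set. (\<forall>n. is_ideal (I n)) \<and> (\<forall>n. I (Suc n) \<subseteq> I n)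
        \<longrightarrow> (\<exists>N. \<forall>n\<ge>N. I n = I N))"

definition GE_poly :: "'a::comm_ring_1 set \<Rightarrow> 'a poly \<Rightarrow> bool" where
  "GE_poly m f \<longleftrightarrow> degree f \<ge> 1 \<and> lead_coeff f = 1 \<and> (\<forall>i<degree f. coeff f i \<in> m)"

definition poly_ord :: "'a::zero poly \<Rightarrow> nat" where
  "poly_ord f = (LEAST i. coeff f i \<noteq> 0)"

end

theory Submission
  imports Defs
begin

locale lr =
  fixes m :: "'a::comm_ring_1 set"
  assumes ideal: "is_ideal m" and one_notin: "(1::'a) \<notin> m"
    and sq: "\<forall>a\<in>m. \<forall>b\<in>m. a*b = 0"
    and unit: "\<forall>x. x \<notin> m \<longrightarrow> (\<exists>y. x*y = 1)"
begin

lemma zero_in: "0 \<in> m" using ideal by (simp add: is_ideal_def)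
lemma add_in: "x \<in> m \<Longrightarrow> y \<in> m \<Longrightarrow> x + y \<in> m" using ideal by (simp add: is_ideal_def)
lemma lmult_in: "x \<in> m \<Longrightarrow> r * x \<in> m" using ideal by (simp add: is_ideal_def)
lemma rmult_in: "x \<in> m \<Longrightarrow> x * r \<in> m" using lmult_in[of x r] by (simp add: mult.commute)
lemma uminus_in: "x \<in> m \<Longrightarrow> - x \<in> m" using lmult_in[of x "-1"] by simp
lemma sum_in: "(\<And>i. i \<in> A \<Longrightarrow> g i \<in> m) \<Longrightarrow> sum g A \<in> m"
  by (induction A rule: infinite_finite_induct) (auto simp: zero_in add_in)
lemma add_notin: "x \<notin> m \<Longrightarrow> y \<in> m \<Longrightarrow> x + y \<notin> m"
proof
  assume "x \<notin> m" "y \<in> m" "x + y \<in> m"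
  then have "(x + y) + (- y) \<in> m" using add_in uminus_in by blast
  then show False using \<open>x \<notin> m\<close> by simp
qed
lemma zero_ne_one: "(0::'a) \<noteq> 1" using zero_in one_notin by auto
lemma unit_notin: "x * y = 1 \<Longrightarrow> x \<notin> m"
  using rmult_in[of x y] one_notin by auto
lemma mult_notin: "x \<notin> m \<Longrightarrow> y \<notin> m \<Longrightarrow> x * y \<notin> m"
proof -
  assume "x \<notin> m" "y \<notin> m"
  then obtain x' y' where "x * x' = 1" "y * y' = 1" using unit by blast
  then have "(x*y) * (x'*y') = 1" by (metis mult.assoc mult.commute mult_1_right)
  then show ?thesis by (rule unit_notin)
qed

definition inM :: "'a poly \<Rightarrow> bool" where "inM p \<longleftrightarrow> (\<forall>i. coeff p i \<in> m)"

lemma inM_mult_left: "inM p \<Longrightarrow> inM (p * q)"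
  unfolding inM_def coeff_mult by (auto intro!: sum_in rmult_in)
lemma inM_mult_right: "inM q \<Longrightarrow> inM (p * q)"
  using inM_mult_left[of q p] by (simp add: mult.commute)
lemma inM_add: "inM p \<Longrightarrow> inM q \<Longrightarrow> inM (p + q)"
  unfolding inM_def by (auto intro!: add_in)
lemma inM_sum: "(\<And>i. i \<in> A \<Longrightarrow> inM (g i)) \<Longrightarrow> inM (sum g A)"
  unfolding inM_def by (auto simp: coeff_sum intro!: sum_in)
lemma inM_zero: "inM p \<Longrightarrow> inM q \<Longrightarrow> p * q = 0"
  unfolding inM_def using sq by (auto simp: coeff_mult intro!: poly_eqI sum.neutral)

lemma lo_lo:
  assumes "coeff a i0 \<notin> m" "\<forall>i<i0. coeff a i \<in> m" "coeff b j0 \<notin> m" "\<forall>j<j0. coeff b j \<in> m"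
  shows "coeff (a*b) (i0+j0) \<notin> m"
proof -
  let ?t = "\<lambda>i. coeff a i * coeff b (i0 + j0 - i)"
  have "coeff (a*b) (i0+j0) = ?t i0 + sum ?t ({..i0+j0} - {i0})"
    unfolding coeff_mult by (subst sum.remove[of _ i0]) auto
  moreover have "sum ?t ({..i0+j0} - {i0}) \<in> m"
  proof (rule sum_in)
    fix i assume "i \<in> {..i0+j0} - {i0}"
    then have "i < i0 \<or> i0 + j0 - i < j0" by auto
    then show "?t i \<in> m" using assms by (auto intro: rmult_in lmult_in)
  qed
  moreover have "?t i0 \<notin> m" using assms mult_notin by simp
  ultimately show ?thesis using add_notin by simp
qed

lemma hi_hi:
  assumes "coeff a i0 \<notin> m" "\<forall>i>i0. coeff a i \<in> m" "coeff b j0 \<notin> m" "\<forall>j>j0. coeff b j \<in> m"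
  shows "coeff (a*b) (i0+j0) \<notin> m"
proof -
  let ?t = "\<lambda>i. coeff a i * coeff b (i0 + j0 - i)"
  have "coeff (a*b) (i0+j0) = ?t i0 + sum ?t ({..i0+j0} - {i0})"
    unfolding coeff_mult by (subst sum.remove[of _ i0]) auto
  moreover have "sum ?t ({..i0+j0} - {i0}) \<in> m"
  proof (rule sum_in)
    fix i assume "i \<in> {..i0+j0} - {i0}"
    then have "i > i0 \<or> i0 + j0 - i > j0" by auto
    then show "?t i \<in> m" using assms by (auto intro: rmult_in lmult_in)
  qed
  moreover have "?t i0 \<notin> m" using assms mult_notin by simp
  ultimately show ?thesis using add_notin by simp
qed

lemma obtain_lo:
  assumes "\<not> inM a"
  obtains i0 where "coeff a i0 \<notin> m" "\<forall>i<i0. coeff a i \<in> m"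
proof -
  from assms have "\<exists>i. coeff a i \<notin> m" by (auto simp: inM_def)
  then show ?thesis using that exists_least_iff[of "\<lambda>i. coeff a i \<notin> m"] by blast
qed

lemma obtain_hi:
  assumes "\<not> inM a"
  obtains i0 where "coeff a i0 \<notin> m" "\<forall>i>i0. coeff a i \<in> m"
proof -
  let ?S = "{i. coeff a i \<notin> m}"
  have fin: "finite ?S"
  proof (rule finite_subset)
    show "?S \<subseteq> {..degree a}"
    proof
      fix x assume "x \<in> ?S"
      then show "x \<in> {..degree a}" using zero_in coeff_eq_0[of a x] by fastforce
    qed
  qed auto
  have ne: "?S \<noteq> {}" using assms by (auto simp: inM_def)
  show ?thesis
  proof (rule that[of "Max ?S"])
    show "coeff a (Max ?S) \<notin> m" using Max_in[OF fin ne] by simp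
    show "\<forall>i>Max ?S. coeff a i \<in> m" using Max_ge[OF fin] by (auto simp: not_le[symmetric])
  qed
qed

lemma unit_coeffs:
  assumes "p dvd 1" "i \<ge> 1" shows "coeff p i \<in> m"
proof (rule ccontr)
  assume ni: "coeff p i \<notin> m"
  from assms obtain g where pg: "1 = p * g" by (auto elim: dvdE)
  have "\<not> inM p" using ni by (auto simp: inM_def)
  then obtain r where r: "coeff p r \<notin> m" "\<forall>j>r. coeff p j \<in> m" by (rule obtain_hi)
  have "r \<ge> 1" using r ni assms(2) by (metis le_trans not_le)
  have "\<not> inM g"
  proof
    assume "inM g" then have "inM (p*g)" by (rule inM_mult_right)
    then have "coeff (p*g) 0 \<in> m" by (auto simp: inM_def)
    then show False using pg one_notin by simp
  qed
  then obtain t where t: "coeff g t \<notin> m" "\<forall>j>t. coeff g j \<in> m" by (rule obtain_hi)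
  have "coeff (p*g) (r+t) \<notin> m" using hi_hi r t by blast
  then show False using pg \<open>r \<ge> 1\<close> zero_in by auto
qed

lemma U:
  assumes "coeff p 0 \<notin> m" "\<forall>i>0. coeff p i \<in> m" shows "p dvd 1"
proof -
  let ?c = "coeff p 0"
  obtain c' where cc: "?c * c' = 1" using unit assms by blast
  define n where "n = p - [:?c:]"
  have "inM n" unfolding inM_def
  proof
    fix i show "coeff n i \<in> m"
      using assms zero_in by (cases i) (auto simp: n_def)
  qed
  then have nn: "n * n = 0" using inM_zero by blast
  have p: "p = [:?c:] + n" by (simp add: n_def)
  have "p * ([:c':] - smult (c'*c') n) = 1"
  proof -
    have e1: "[:?c:] * ([:c':] - smult (c'*c') n) = 1 - smult c' n"
    proof -
      have "?c * (c' * c') = c'" using cc by (metis mult.assoc mult_1_left)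
      then show ?thesis using cc by (simp add: smult_diff_right one_pCons)
    qed
    have e2: "n * ([:c':] - smult (c'*c') n) = smult c' n"
      using nn by (simp add: right_diff_distrib)
    have "p * ([:c':] - smult (c'*c') n) = [:?c:] * ([:c':] - smult (c'*c') n) + n * ([:c':] - smult (c'*c') n)"
      by (subst p) (rule distrib_right)
    also have "\<dots> = 1" unfolding e1 e2 by simp
    finally show ?thesis .
  qed
  then show ?thesis by (metis dvdI)
qed

lemma GE_coeff_notin: "GE_poly m h \<Longrightarrow> coeff h n \<notin> m \<Longrightarrow> n = degree h"
  unfolding GE_poly_def using zero_in
  by (metis coeff_eq_0 linorder_neqE_nat)

lemma GE_not_inM: "GE_poly m h \<Longrightarrow> \<not> inM h"
  unfolding GE_poly_def inM_def using one_notin by metis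

lemma IRR:
  assumes h: "GE_poly m h" and h0: "coeff h 0 \<noteq> 0" shows "irreducible h"
proof (rule irreducibleI)
  show "h \<noteq> 0" using GE_not_inM[OF h] zero_in by (auto simp: inM_def)
  show "\<not> h dvd 1"
  proof
    assume "h dvd 1"
    then have "coeff h (degree h) \<in> m" using h unit_coeffs[OF \<open>h dvd 1\<close>, of "degree h"] by (simp add: GE_poly_def)
    moreover have "coeff h (degree h) = 1" using h by (simp add: GE_poly_def)
    ultimately show False using one_notin by simp
  qed
  fix a b assume hab: "h = a * b"
  have na: "\<not> inM a" using GE_not_inM[OF h] hab inM_mult_left by blast
  have nb: "\<not> inM b" using GE_not_inM[OF h] hab inM_mult_right by blast
  obtain la where la: "coeff a la \<notin> m" "\<forall>i<la. coeff a i \<in> m" using obtain_lo[OF na] by blast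
  obtain lb where lb: "coeff b lb \<notin> m" "\<forall>i<lb. coeff b i \<in> m" using obtain_lo[OF nb] by blast
  obtain ha where ha: "coeff a ha \<notin> m" "\<forall>i>ha. coeff a i \<in> m" using obtain_hi[OF na] by blast
  obtain hb where hb: "coeff b hb \<notin> m" "\<forall>i>hb. coeff b i \<in> m" using obtain_hi[OF nb] by blast
  have e1: "la + lb = degree h" using GE_coeff_notin[OF h] lo_lo[OF la lb] hab by simp
  have e2: "ha + hb = degree h" using GE_coeff_notin[OF h] hi_hi[OF ha hb] hab by simp
  have "la \<le> ha" using la ha by (metis not_le)
  have "lb \<le> hb" using lb hb by (metis not_le)
  have "coeff a 0 \<notin> m \<or> coeff b 0 \<notin> m"
    using h0 hab sq by (auto simp: coeff_mult_0)
  then show "a dvd 1 \<or> b dvd 1"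
  proof
    assume "coeff a 0 \<notin> m"
    then have "la = 0" using la by (metis neq0_conv)
    then have "ha = 0" using e1 e2 \<open>lb \<le> hb\<close> by simp
    then show ?thesis using U \<open>coeff a 0 \<notin> m\<close> ha by auto
  next
    assume "coeff b 0 \<notin> m"
    then have "lb = 0" using lb by (metis neq0_conv)
    then have "hb = 0" using e1 e2 \<open>la \<le> ha\<close> by simp
    then show ?thesis using U \<open>coeff b 0 \<notin> m\<close> hb by auto
  qed
qed

lemma PROD:
  fixes n :: nat and d :: "nat \<Rightarrow> nat" and g :: "nat \<Rightarrow> 'a poly"
  assumes "\<forall>i\<in>{1..n}. inM (g i)"
  shows "(\<Prod>i=1..n. monom 1 (d i) + g i) =
     monom 1 (\<Sum>i=1..n. d i) + (\<Sum>i=1..n. monom 1 ((\<Sum>j=1..n. d j) - d i) * g i)"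
  using assms
proof (induction n)
  case 0 then show ?case by (simp add: one_pCons monom_0)
next
  case (Suc n)
  define D where "D = (\<Sum>i=1..n. d i)"
  define S where "S = (\<Sum>i=1..n. monom 1 (D - d i) * g i)"
  let ?e = "d (Suc n)" and ?G = "g (Suc n)"
  have IH: "(\<Prod>i=1..n. monom 1 (d i) + g i) = monom 1 D + S"
    using Suc by (simp add: D_def S_def)
  have iS: "inM S" unfolding S_def using Suc.prems by (auto intro!: inM_sum inM_mult_right)
  have iG: "inM ?G" using Suc.prems by simp
  have SG: "S * ?G = 0" using inM_zero[OF iS iG] .
  have Sum: "(\<Sum>j=1..Suc n. d j) = D + ?e" by (simp add: D_def)
  have "(\<Prod>i=1..Suc n. monom 1 (d i) + g i) = (monom 1 D + S) * (monom 1 ?e + ?G)"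
    using IH by simp
  also have "\<dots> = monom 1 D * monom 1 ?e + monom 1 D * ?G + S * monom 1 ?e + S * ?G"
    by (simp only: distrib_left distrib_right add_ac)
  also have "\<dots> = monom 1 (D + ?e) + monom 1 D * ?G + S * monom 1 ?e"
    using SG by (simp add: mult_monom)
  also have "S * monom 1 ?e = (\<Sum>i=1..n. monom 1 (D + ?e - d i) * g i)"
  proof -
    have "S * monom 1 ?e = (\<Sum>i=1..n. monom 1 (D - d i) * g i * monom 1 ?e)"
      unfolding S_def by (simp add: sum_distrib_right)
    also have "\<dots> = (\<Sum>i=1..n. monom 1 (D + ?e - d i) * g i)"
    proof (rule sum.cong)
      fix i assume "i \<in> {1..n}"
      then have "d i \<le> D" unfolding D_def by (intro member_le_sum) auto
      then have "D + ?e - d i = (D - d i) + ?e" by simp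
      have "monom 1 (D - d i) * g i * monom 1 ?e = (monom 1 (D - d i) * monom 1 ?e) * g i"
        by (simp only: ac_simps)
      also have "\<dots> = monom 1 (D + ?e - d i) * g i"
        by (simp only: mult_monom mult_1 \<open>D + ?e - d i = (D - d i) + ?e\<close>)
      finally show "monom 1 (D - d i) * g i * monom 1 ?e = monom 1 (D + ?e - d i) * g i" .
    qed simp
    finally show ?thesis .
  qed
  finally have "(\<Prod>i=1..Suc n. monom 1 (d i) + g i) = monom 1 (D + ?e) + monom 1 D * ?G + (\<Sum>i=1..n. monom 1 (D + ?e - d i) * g i)" .
  also have "\<dots> = monom 1 (\<Sum>j=1..Suc n. d j) + (\<Sum>i=1..Suc n. monom 1 ((\<Sum>j=1..Suc n. d j) - d i) * g i)"
  proof -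
    have H: "(\<Sum>i=1..Suc n. monom 1 (D + ?e - d i) * g i) = (\<Sum>i=1..n. monom 1 (D + ?e - d i) * g i) + monom 1 D * ?G"
      by (simp add: sum.cl_ivl_Suc)
    show ?thesis unfolding Sum H by (simp only: add_ac)
  qed
  finally show ?case .
qed

end

theorem proposition3p7:
  fixes m :: "'a::comm_ring_1 set" and k :: nat and f :: "nat \<Rightarrow> 'a poly"
  assumes artinian: "artinian_ring TYPE('a)"
    and max: "maximal_ideal m"
    and local: "\<forall>J. maximal_ideal J \<longrightarrow> J = m"
    and m_nonzero: "m \<noteq> {0}"
    and m_sq: "\<forall>a\<in>m. \<forall>b\<in>m. a * b = 0"
    and k: "k \<ge> 2"
    and GE: "\<forall>i\<in>{1..k}. GE_poly m (f i)"
    and deg_mono: "\<forall>i j. 1 \<le> i \<and> i \<le> j \<and> j \<le> k \<longrightarrow> degree (f j) \<le> degree (f i)"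
  shows "\<exists>h. GE_poly m h \<and> degree h = degree (f 1) \<and>
           (\<Prod>i=1..k. f i) = h * [:0, 1:] ^ (\<Sum>i=2..k. degree (f i)) \<and>
           (irreducible (f 1) \<and> degree (f 1) > degree (f 2) \<longrightarrow>
              irreducible h \<and> poly_ord (\<Prod>i=1..k. f i) = (\<Sum>i=2..k. degree (f i)))"
proof -
  have idm: "is_ideal m" and mne: "m \<noteq> UNIV" using max by (auto simp: maximal_ideal_def)
  have one: "1 \<notin> m"
  proof
    assume "1 \<in> m"
    then have "\<forall>r. r \<in> m" using idm unfolding is_ideal_def by (metis mult_1_right)
    then show False using mne by auto
  qed
  have unitx: "\<forall>x. x \<notin> m \<longrightarrow> (\<exists>y. x*y = 1)"
  proof (intro allI impI)
    fix x :: 'a assume xm: "x \<notin> m"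
    define J where "J = {u + r*x | u r. u \<in> m}"
    have memJ: "\<And>u r. u \<in> m \<Longrightarrow> u + r*x \<in> J" by (auto simp: J_def)
    have "is_ideal J" unfolding is_ideal_def
    proof (intro conjI ballI allI)
      show "0 \<in> J" using memJ[of 0 0] idm by (simp add: is_ideal_def)
    next
      fix a b assume "a \<in> J" "b \<in> J"
      then obtain u1 r1 u2 r2 where "a = u1 + r1*x" "b = u2 + r2*x" "u1 \<in> m" "u2 \<in> m"
        by (auto simp: J_def)
      then have "a + b = (u1 + u2) + (r1 + r2)*x" "u1 + u2 \<in> m"
        using idm by (auto simp: algebra_simps is_ideal_def)
      then show "a + b \<in> J" using memJ by simp
    next
      fix s a assume "a \<in> J"
      then obtain u1 r1 where "a = u1 + r1*x" "u1 \<in> m" by (auto simp: J_def)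
      then have "s * a = s*u1 + (s*r1)*x" "s*u1 \<in> m"
        using idm by (auto simp: algebra_simps is_ideal_def)
      then show "s * a \<in> J" using memJ by simp
    qed
    moreover have "m \<subseteq> J" using memJ[of _ 0] by auto
    ultimately have "J = m \<or> J = UNIV" using max by (auto simp: maximal_ideal_def)
    moreover have "x \<in> J" using memJ[of 0 1] idm by (simp add: is_ideal_def)
    ultimately have "1 \<in> J" using xm by auto
    then obtain u r where ur: "1 = u + r*x" "u \<in> m" by (auto simp: J_def)
    then have uu: "u * u = 0" using m_sq by auto
    have rx: "r * x = 1 - u" using ur(1) by (metis add_diff_cancel_left')
    have "x * (r * (1 + u)) = (r * x) * (1 + u)" by (simp only: ac_simps)
    also have "\<dots> = (1 - u) * (1 + u)" by (simp only: rx)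
    also have "\<dots> = 1" using uu by (simp add: algebra_simps)
    finally show "\<exists>y. x*y = 1" by blast
  qed
  interpret lr m using idm one m_sq unitx by unfold_locales auto
  define d where "d i = degree (f i)" for i
  define g where "g i = f i - monom 1 (d i)" for i
  have fg: "f i = monom 1 (d i) + g i" for i by (simp add: g_def)
  have cg: "coeff (g i) j = coeff (f i) j - (if d i = j then 1 else 0)" for i j
    by (simp add: g_def)
  have lc: "coeff (f i) (d i) = 1" if "i \<in> {1..k}" for i
    using GE that by (auto simp: GE_poly_def d_def)
  have gM: "inM (g i)" if "i \<in> {1..k}" for i
    unfolding inM_def
  proof
    fix j
    show "coeff (g i) j \<in> m"
    proof (cases "j < d i")
      case True then show ?thesis using GE that by (auto simp: cg GE_poly_def d_def)
    next
      case False
      then have "j = d i \<or> j > d i" by auto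
      then show ?thesis using lc[OF that] zero_in by (auto simp: cg d_def coeff_eq_0)
    qed
  qed
  have gz: "coeff (g i) j = 0" if "i \<in> {1..k}" "j \<ge> d i" for i j
  proof -
    have "j = d i \<or> j > d i" using that by auto
    then show ?thesis using lc[OF that(1)] by (auto simp: cg d_def coeff_eq_0)
  qed
  have dle: "d i \<le> d 1" if "i \<in> {1..k}" for i using deg_mono that by (auto simp: d_def)
  define e where "e = (\<Sum>i=2..k. d i)"
  define D where "D = (\<Sum>i=1..k. d i)"
  have De: "D = d 1 + e" unfolding D_def e_def using k
    by (simp add: sum.atLeast_Suc_atMost numeral_2_eq_2)
  define G where "G = (\<Sum>i=1..k. monom 1 (d 1 - d i) * g i)"
  define h where "h = monom 1 (d 1) + G"
  have prodf: "(\<Prod>i=1..k. f i) = monom 1 D + (\<Sum>i=1..k. monom 1 (D - d i) * g i)"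
  proof -
    have "(\<Prod>i=1..k. f i) = (\<Prod>i=1..k. monom 1 (d i) + g i)" using fg by simp
    also have "\<dots> = monom 1 D + (\<Sum>i=1..k. monom 1 (D - d i) * g i)"
      unfolding D_def by (rule PROD) (use gM in blast)
    finally show ?thesis .
  qed
  have X: "[:0, 1:] ^ e = monom 1 e" by (simp add: monom_altdef)
  have prodh: "(\<Prod>i=1..k. f i) = h * [:0, 1:] ^ e"
  proof -
    have "h * [:0, 1:] ^ e = monom 1 (d 1) * monom 1 e + (\<Sum>i=1..k. monom 1 (d 1 - d i) * g i * monom 1 e)"
      unfolding X h_def G_def by (simp add: distrib_right sum_distrib_right)
    also have "(\<Sum>i=1..k. monom 1 (d 1 - d i) * g i * monom 1 e) = (\<Sum>i=1..k. monom 1 (D - d i) * g i)"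
    proof (rule sum.cong)
      fix i assume i: "i \<in> {1..k}"
      have eq: "D - d i = (d 1 - d i) + e" using dle[OF i] De by simp
      have "monom 1 (d 1 - d i) * g i * monom 1 e = (monom 1 (d 1 - d i) * monom 1 e) * g i"
        by (simp only: ac_simps)
      also have "\<dots> = monom 1 (D - d i) * g i"
        by (simp only: mult_monom mult_1 eq)
      finally show "monom 1 (d 1 - d i) * g i * monom 1 e = monom 1 (D - d i) * g i" .
    qed simp
    finally show ?thesis using prodf De by (simp add: mult_monom)
  qed
  have GM: "inM G" unfolding G_def using gM by (auto intro!: inM_sum inM_mult_right)
  have Gz: "coeff G n = 0" if "n \<ge> d 1" for n
    unfolding G_def coeff_sum
  proof (rule sum.neutral, rule ballI)
    fix i assume i: "i \<in> {1..k}"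
    show "coeff (monom 1 (d 1 - d i) * g i) n = 0"
      using gz[OF i, of "n - (d 1 - d i)"] dle[OF i] that by (simp add: coeff_monom_mult)
  qed
  have ch: "coeff h n = (if d 1 = n then 1 else 0) + coeff G n" for n
    by (simp add: h_def coeff_monom)
  have d1pos: "d 1 \<ge> 1" using GE k by (auto simp: GE_poly_def d_def)
  have degh: "degree h = d 1"
  proof (rule le_antisym)
    show "degree h \<le> d 1" by (rule degree_le) (auto simp: ch Gz)
    show "d 1 \<le> degree h" by (rule le_degree) (simp add: ch Gz zero_ne_one[symmetric])
  qed
  have GEh: "GE_poly m h" unfolding GE_poly_def degh
    using d1pos GM by (auto simp: ch Gz inM_def)
  show ?thesis
  proof (intro exI conjI impI)
    show "GE_poly m h" by (rule GEh)
    show "degree h = degree (f 1)" using degh by (simp add: d_def)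
    show "(\<Prod>i=1..k. f i) = h * [:0, 1:] ^ (\<Sum>i=2..k. degree (f i))"
      using prodh by (simp add: e_def d_def)
  next
    assume irr: "irreducible (f 1) \<and> degree (f 2) < degree (f 1)"
    have lt: "d i < d 1" if "i \<in> {2..k}" for i
    proof -
      have "degree (f i) \<le> degree (f 2)" using deg_mono[rule_format, of 2 i] that by auto
      then show ?thesis using irr by (simp add: d_def)
    qed
    have d2: "d 2 \<ge> 1" using GE k by (auto simp: GE_poly_def d_def)
    have f10: "coeff (f 1) 0 \<noteq> 0"
    proof
      assume c0: "coeff (f 1) 0 = 0"
      obtain a q where fq: "f 1 = pCons a q" by (cases "f 1")
      then have "a = 0" using c0 by simp
      then have f1q: "f 1 = [:0, 1:] * q" using fq by simp
      have irr2: "\<forall>a b. f 1 = a * b \<longrightarrow> a dvd 1 \<or> b dvd 1" using irr unfolding irreducible_def by (elim conjE)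
      have "([:0, 1:] :: 'a poly) dvd 1 \<or> q dvd 1"
        using irr2 f1q by metis
      moreover have "\<not> ([:0, 1:] :: 'a poly) dvd 1"
      proof
        assume "([:0, 1:] :: 'a poly) dvd 1"
        then have "coeff ([:0, 1:] :: 'a poly) 1 \<in> m" by (rule unit_coeffs) simp
        then show False using one by simp
      qed
      moreover have "\<not> q dvd 1"
      proof
        assume "q dvd 1"
        moreover have "d 1 - 1 \<ge> 1" using d2 irr unfolding d_def by linarith
        ultimately have "coeff q (d 1 - 1) \<in> m" using unit_coeffs by blast
        moreover have "coeff q (d 1 - 1) = coeff (f 1) (d 1)"
          using fq d1pos by (metis Suc_diff_1 coeff_pCons_Suc less_le_trans zero_less_one)
        ultimately show False using lc[of 1] k one by simp
      qed
      ultimately show False by blast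
    qed
    have h0: "coeff h 0 = coeff (f 1) 0"
    proof -
      have "coeff h 0 = coeff G 0" using d1pos by (simp add: ch)
      also have "\<dots> = (\<Sum>i=1..k. coeff (monom 1 (d 1 - d i) * g i) 0)"
        by (simp add: G_def coeff_sum)
      also have "\<dots> = coeff (monom 1 (d 1 - d 1) * g 1) 0 + (\<Sum>i=2..k. coeff (monom 1 (d 1 - d i) * g i) 0)"
        using k by (simp add: sum.atLeast_Suc_atMost numeral_2_eq_2)
      also have "(\<Sum>i=2..k. coeff (monom 1 (d 1 - d i) * g i) 0) = 0"
        using lt by (intro sum.neutral) (auto simp: coeff_monom_mult)
      finally show ?thesis using d1pos by (simp add: cg)
    qed
    show "irreducible h" using IRR[OF GEh] h0 f10 by simp
    have "poly_ord (\<Prod>i=1..k. f i) = e"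
      unfolding poly_ord_def prodh X
    proof (rule Least_equality)
      show "coeff (h * monom 1 e) e \<noteq> 0"
        using h0 f10 by (simp add: mult.commute[of h] coeff_monom_mult)
      show "e \<le> y" if "coeff (h * monom 1 e) y \<noteq> 0" for y
        using that by (simp add: mult.commute[of h] coeff_monom_mult split: if_splits)
    qed
    then show "poly_ord (\<Prod>i=1..k. f i) = (\<Sum>i=2..k. degree (f i))" by (simp add: e_def d_def)
  qed
qed

end
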